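(* Let $\gamma\in\mathbb C$ and $H_1(\gamma)=I-\gamma D$. Then $K_H(H_1(\gamma))=K_H(H_1(\gamma)^{-1})=n|\gamma|$.
   Context: Let $n\ge1$ and $\mathcal P_n$ the complex vector space of polynomials in one complex variable of degree at most $n$; $D$ is differentiation and $I$ the identity on $\mathcal P_n$. For nonzero $f$, $Z(f)$ is the multiset of roots of $f$ (with multiplicity; empty for nonzero constants); $Z(0)=\mathbb C$. For finite nonempty $A,B\subset\mathbb C$, $d_h(A,B)=\max_{y\in B}\min_{x\in A}|x-y|$ and $d_H(A,B)=\max\{d_h(A,B),d_h(B,A)\}$, with conventions $d_H(\emptyset,\emptyset)=0$, $d_H(A,\emptyset)=d_H(\emptyset,A)=+\infty$ for $A\ne\emptyset$, $d_H(A,B)=0$ if one of $A,B$ equals $\mathbb C$ and the other is nonempty. $K_H(T)=\sup_{f\in\mathcal P_n}d_H(Z(f),Z(Tf))$. *)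

theory Defs
  imports "HOL-Analysis.Analysis" "HOL-Computational_Algebra.Polynomial"
begin

text \<open>Zero set Z(f) as a set (Hausdorff distance only sees the underlying set); Z(0) = C.\<close>
definition Zset :: "complex poly \<Rightarrow> complex set" where
  "Zset f = (if f = 0 then UNIV else {z. poly f z = 0})"

definition dh :: "complex set \<Rightarrow> complex set \<Rightarrow> real" where
  "dh A B = Max ((\<lambda>y. Min ((\<lambda>x. cmod (x - y)) ` A)) ` B)"

definition dH :: "complex set \<Rightarrow> complex set \<Rightarrow> ereal" where
  "dH A B =
     (if A = {} \<and> B = {} then 0
      else if A = {} \<or> B = {} then \<infinity>
      else if A = UNIV \<or> B = UNIV then 0
      else ereal (max (dh A B) (dh B A)))"

definition Pn :: "nat \<Rightarrow> complex poly set" where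
  "Pn n = {f. degree f \<le> n}"

definition KH :: "nat \<Rightarrow> (complex poly \<Rightarrow> complex poly) \<Rightarrow> ereal" where
  "KH n T = (SUP f \<in> Pn n. dH (Zset f) (Zset (T f)))"

definition H1 :: "complex \<Rightarrow> complex poly \<Rightarrow> complex poly" where
  "H1 \<gamma> f = f - smult \<gamma> (pderiv f)"

definition H1inv :: "nat \<Rightarrow> complex \<Rightarrow> complex poly \<Rightarrow> complex poly" where
  "H1inv n \<gamma> f = (THE g. g \<in> Pn n \<and> H1 \<gamma> g = f)"

end

theory Submission imports Defs "HOL-Computational_Algebra.Fundamental_Theorem_Algebra" begin

definition Lc :: "(nat \<Rightarrow> complex) \<Rightarrow> complex poly \<Rightarrow> complex" where
  "Lc c P = (\<Sum>k\<le>degree P. c k * coeff P k)"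

lemma Lc_bound: "degree P \<le> N \<Longrightarrow> Lc c P = (\<Sum>k\<le>N. c k * coeff P k)"
  unfolding Lc_def
  by (rule sum.mono_neutral_left) (auto simp: coeff_eq_0)

lemma Lc_smult: "Lc c (smult a P) = a * Lc c P"
proof -
  have "Lc c (smult a P) = (\<Sum>k\<le>degree P. c k * coeff (smult a P) k)"
    by (rule Lc_bound) (simp add: degree_smult_le)
  also have "\<dots> = a * Lc c P" by (simp add: Lc_def sum_distrib_left algebra_simps)
  finally show ?thesis .
qed

lemma Lc_mult: "Lc c ([:1, y:] * P) = Lc (\<lambda>k. c k + y * c (Suc k)) P"
proof -
  define N where "N = degree P"
  have d: "degree ([:1, y:] * P) \<le> Suc N"
    using degree_mult_le[of "[:1,y:]" P] unfolding N_def by (auto split: if_splits)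
  have e: "[:1, y:] * P = P + pCons 0 (smult y P)"
    by (simp add: mult_pCons_left)
  have "Lc c ([:1, y:] * P) = (\<Sum>k\<le>Suc N. c k * coeff ([:1, y:] * P) k)"
    by (rule Lc_bound[OF d])
  also have "\<dots> = (\<Sum>k\<le>Suc N. c k * coeff P k) + (\<Sum>k\<le>Suc N. c k * coeff (pCons 0 (smult y P)) k)"
    by (simp add: e sum.distrib algebra_simps)
  also have "(\<Sum>k\<le>Suc N. c k * coeff P k) = (\<Sum>k\<le>N. c k * coeff P k)"
    by (simp add: N_def coeff_eq_0)
  also have "(\<Sum>k\<le>Suc N. c k * coeff (pCons 0 (smult y P)) k) = (\<Sum>k\<le>N. c (Suc k) * (y * coeff P k))"
    by (subst sum.atMost_Suc_shift) simp
  also have "(\<Sum>k\<le>N. c k * coeff P k) + (\<Sum>k\<le>N. c (Suc k) * (y * coeff P k)) =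
      (\<Sum>k\<le>N. (c k + y * c (Suc k)) * coeff P k)"
    by (simp add: sum.distrib algebra_simps)
  also have "\<dots> = Lc (\<lambda>k. c k + y * c (Suc k)) P" by (simp add: Lc_def N_def)
  finally show ?thesis .
qed

definition gp :: "nat \<Rightarrow> (nat \<Rightarrow> complex) \<Rightarrow> complex poly" where
  "gp m c = (\<Sum>k\<le>m. monom (c k * of_nat (m choose k)) k)"

lemma coeff_gp: "coeff (gp m c) k = c k * of_nat (m choose k)"
  unfolding gp_def by (auto simp: coeff_sum coeff_monom)

lemma poly_gp: "poly (gp m c) t = (\<Sum>k\<le>m. c k * of_nat (m choose k) * t ^ k)"
  unfolding gp_def by (simp add: poly_sum poly_monom)


lemma laguerre_id:
  "smult (of_nat (Suc m)) (gp m (\<lambda>k. c k + z * c (Suc k))) =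
   smult (of_nat (Suc m)) (gp (Suc m) c) + [:z, -1:] * pderiv (gp (Suc m) c)"
proof (rule poly_eqI)
  fix k
  have b1: "of_nat (Suc k) * of_nat (Suc m choose Suc k) = (of_nat (Suc m) * of_nat (m choose k) :: complex)"
    using Suc_times_binomial[of k m] by (metis of_nat_mult)
  have b2: "of_nat (Suc m) * of_nat (Suc m choose k) - of_nat k * of_nat (Suc m choose k) =
            (of_nat (Suc m) * of_nat (m choose k) :: complex)"
  proof (cases "k \<le> Suc m")
    case True
    have h: "Suc m * (Suc m choose k) - k * (Suc m choose k) = Suc m * (m choose k)"
      using binomial_absorb_comp[of "Suc m" k] by (simp add: diff_mult_distrib)
    have le: "k * (Suc m choose k) \<le> Suc m * (Suc m choose k)" using True by (intro mult_le_mono1) simp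
    have "of_nat (Suc m * (Suc m choose k) - k * (Suc m choose k)) = (of_nat (Suc m * (m choose k))::complex)"
      using h by simp
    thus ?thesis by (simp only: of_nat_diff[OF le] of_nat_mult)
  next
    case False thus ?thesis by (simp add: binomial_eq_0)
  qed
  have "coeff ([:z, -1:] * pderiv (gp (Suc m) c)) k =
        z * coeff (pderiv (gp (Suc m) c)) k - (case k of 0 \<Rightarrow> 0 | Suc j \<Rightarrow> coeff (pderiv (gp (Suc m) c)) j)"
    by (simp add: mult_pCons_left coeff_pCons split: nat.split)
  also have "\<dots> = z * of_nat (Suc k) * c (Suc k) * of_nat (Suc m choose Suc k) - of_nat k * c k * of_nat (Suc m choose k)"
    by (simp add: coeff_pderiv coeff_gp split: nat.split)
  finally have e: "coeff ([:z, -1:] * pderiv (gp (Suc m) c)) k = \<dots>" .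
  have "coeff (smult (of_nat (Suc m)) (gp (Suc m) c) + [:z, -1:] * pderiv (gp (Suc m) c)) k
      = c k * (of_nat (Suc m) * of_nat (Suc m choose k) - of_nat k * of_nat (Suc m choose k))
        + z * c (Suc k) * (of_nat (Suc k) * of_nat (Suc m choose Suc k))"
    unfolding coeff_add e coeff_smult coeff_gp by (simp only: algebra_simps)
  also have "\<dots> = c k * (of_nat (Suc m) * of_nat (m choose k)) + z * c (Suc k) * (of_nat (Suc m) * of_nat (m choose k))"
    by (simp only: b1 b2)
  also have "\<dots> = coeff (smult (of_nat (Suc m)) (gp m (\<lambda>k. c k + z * c (Suc k)))) k"
    unfolding coeff_smult coeff_gp by (simp only: algebra_simps)
  finally show "coeff (smult (of_nat (Suc m)) (gp m (\<lambda>k. c k + z * c (Suc k)))) k =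
    coeff (smult (of_nat (Suc m)) (gp (Suc m) c) + [:z, -1:] * pderiv (gp (Suc m) c)) k" by simp
qed


lemma degree_gp: "degree (gp m c) \<le> m"
  by (rule degree_le) (simp add: coeff_gp binomial_eq_0)

lemma logderiv:
  fixes a :: "nat \<Rightarrow> complex"
  assumes "poly (\<Prod>i<m. [:-a i,1:]) w \<noteq> 0"
  shows "poly (pderiv (\<Prod>i<m. [:-a i,1:])) w = poly (\<Prod>i<m. [:-a i,1:]) w * (\<Sum>i<m. 1/(w - a i))"
  using assms
proof (induction m)
  case 0
  then show ?case by simp
next
  case (Suc m)
  define Q where "Q = (\<Prod>i<m. [:-a i,1:])"
  have P: "(\<Prod>i<Suc m. [:-a i,1:]) = Q * [:-a m, 1:]" by (simp add: Q_def)
  have ne: "poly Q w \<noteq> 0" "w \<noteq> a m" using Suc.prems unfolding P by auto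
  have IH: "poly (pderiv Q) w = poly Q w * (\<Sum>i<m. 1/(w - a i))" using Suc.IH ne unfolding Q_def by simp
  have "poly (pderiv (Q * [:-a m, 1:])) w = poly Q w + (w - a m) * poly (pderiv Q) w"
  proof -
    have d: "pderiv [:-a m, 1:] = 1" by (simp add: pderiv_pCons)
    have eq: "pderiv (Q * [:-a m, 1:]) = Q + [:-a m, 1:] * pderiv Q" unfolding pderiv_mult d by simp
    show ?thesis by (simp only: eq poly_add poly_mult) (simp add: algebra_simps)
  qed
  also have "\<dots> = poly (Q * [:-a m, 1:]) w * (\<Sum>i<Suc m. 1/(w - a i))"
    using ne by (simp add: IH field_simps)
  finally show ?case unfolding P .
qed

lemma prod_root_zero:
  fixes a :: "nat \<Rightarrow> complex"
  assumes "j < m" shows "poly (\<Prod>i<m. [:-a i,1:]) (a j) = 0"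
  using assms by (auto simp: poly_prod)

lemma disk_identity:
  fixes w v :: complex and r A :: real
  assumes A_def: "A = r^2 - (cmod w)^2"
  shows "(cmod (of_real A * v + cnj w))^2 - r^2 = A * (r^2 * (cmod v)^2 - (cmod (w * v - 1))^2)"
proof -
  obtain a b where w: "w = Complex a b" by (cases w)
  obtain c d where v: "v = Complex c d" by (cases v)
  have A: "A = r^2 - a^2 - b^2" unfolding A_def w by (simp add: cmod_power2)
  have e1: "of_real A * v + cnj w = Complex (A*c + a) (A*d - b)" unfolding w v by (simp add: complex_eq_iff)
  have e2: "w * v - 1 = Complex (a*c - b*d - 1) (a*d + b*c)" unfolding w v by (simp add: complex_eq_iff)
  have e3: "(cmod v)^2 = c^2 + d^2" unfolding v by (simp add: cmod_power2)
  show ?thesis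
    apply (simp only: e1 e2 e3 cmod_power2 complex.sel)
    apply (simp add: A power2_eq_square algebra_simps v)
    done
qed

lemma disk_iff:
  fixes w v :: complex and r :: real
  assumes "cmod w < r" "v \<noteq> 0"
  shows "r \<le> cmod (w - 1/v) \<longleftrightarrow> cmod (of_real (r^2 - (cmod w)^2) * v + cnj w) \<le> r"
proof -
  define A where "A = r^2 - (cmod w)^2"
  have r0: "r > 0" using assms(1) norm_ge_zero[of w] by linarith
  have A0: "A > 0" unfolding A_def using assms(1) by (simp add: power_strict_mono)
  have e1: "cmod (w - 1/v) = cmod (w * v - 1) / cmod v"
  proof -
    have "w - 1/v = (w * v - 1) / v" using assms(2) by (simp add: field_simps)
    thus ?thesis by (simp add: norm_divide)
  qed
  have "r \<le> cmod (w - 1/v) \<longleftrightarrow> r * cmod v \<le> cmod (w * v - 1)"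
    unfolding e1 using assms(2) by (simp add: pos_le_divide_eq)
  also have "\<dots> \<longleftrightarrow> (r * cmod v)^2 \<le> (cmod (w * v - 1))^2"
    using abs_le_square_iff[of "r * cmod v" "cmod (w * v - 1)"] r0 by simp
  also have "\<dots> \<longleftrightarrow> A * (r^2 * (cmod v)^2 - (cmod (w * v - 1))^2) \<le> 0"
    using A0 by (simp add: power_mult_distrib mult_le_0_iff)
  also have "\<dots> \<longleftrightarrow> (cmod (of_real A * v + cnj w))^2 \<le> r^2"
    using disk_identity[OF A_def, of v] by linarith
  also have "\<dots> \<longleftrightarrow> cmod (of_real A * v + cnj w) \<le> r"
    using r0 by (simp add: abs_le_square_iff[symmetric])
  finally show ?thesis unfolding A_def .
qed


lemma laguerre_step:
  fixes c :: "nat \<Rightarrow> complex" and z :: complex and r :: real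
  assumes nz: "\<forall>t. cmod t < r \<longrightarrow> poly (gp (Suc m) c) t \<noteq> 0" and z: "cmod z < r"
  shows "\<forall>t. cmod t < r \<longrightarrow> poly (gp m (\<lambda>k. c k + z * c (Suc k))) t \<noteq> 0"
proof (intro allI impI notI)
  fix w assume w: "cmod w < r" and q0: "poly (gp m (\<lambda>k. c k + z * c (Suc k))) w = 0"
  define p where "p = gp (Suc m) c"
  define M where "M = Suc m"
  have id: "of_nat M * poly p w + (z - w) * poly (pderiv p) w = 0"
    using arg_cong[OF laguerre_id[of m c z], of "\<lambda>q. poly q w"] q0 unfolding p_def M_def
    by (simp add: algebra_simps)
  have pw: "poly p w \<noteq> 0" using nz w p_def by auto
  hence p0: "p \<noteq> 0" by auto
  obtain root where dec: "smult (lead_coeff p) (\<Prod>i<degree p. [:-root i,1:]) = p"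
    by (rule complex_poly_decompose')
  define d where "d = degree p"
  define P where "P = (\<Prod>i<d. [:-root i,1:])"
  have pP: "p = smult (lead_coeff p) P" using dec P_def d_def by simp
  have lc: "lead_coeff p \<noteq> 0" using p0 by simp
  have Pw: "poly P w \<noteq> 0" using pw pP by (metis poly_smult mult_zero_right)
  define S where "S = (\<Sum>i<d. 1/(w - root i))"
  have dP: "poly (pderiv P) w = poly P w * S"
    unfolding P_def S_def by (rule logderiv) (use Pw P_def in simp)
  have e: "of_nat M + (z - w) * S = 0"
  proof -
    have "poly p w = lead_coeff p * poly P w" by (subst pP) simp
    moreover have "poly (pderiv p) w = lead_coeff p * poly P w * S"
      by (subst pP) (simp add: pderiv_smult dP)
    ultimately have "lead_coeff p * poly P w * (of_nat M + (z - w) * S) = 0"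
      using id by (simp add: algebra_simps)
    thus ?thesis using lc Pw by simp
  qed
  have zw: "z \<noteq> w"
  proof
    assume "z = w"
    hence "(of_nat M :: complex) = 0" using e by simp
    hence "M = 0" by (metis of_nat_eq_0_iff)
    thus False by (simp add: M_def)
  qed
  define v where "v = 1/(w - z)"
  have v0: "v \<noteq> 0" using zw by (simp add: v_def)
  have Sv: "S = of_nat M * v"
  proof -
    have "(w - z) * S = of_nat M" using e by (simp add: algebra_simps)
    thus ?thesis using zw unfolding v_def by (simp add: field_simps)
  qed
  have dM: "d \<le> M" using degree_gp[of "Suc m" c] by (simp add: d_def p_def M_def)
  define A where "A = r^2 - (cmod w)^2"
  have roots: "cmod (of_real A * (1/(w - root i)) + cnj w) \<le> r" if "i < d" for i
  proof -
    have "poly P (root i) = 0" unfolding P_def by (rule prod_root_zero[OF that])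
    hence "poly p (root i) = 0" by (subst pP) simp
    hence ri: "r \<le> cmod (root i)"
    proof -
      assume pr: "poly p (root i) = 0"
      show ?thesis
      proof (rule ccontr)
        assume "\<not> r \<le> cmod (root i)"
        hence "cmod (root i) < r" by simp
        thus False using nz pr unfolding p_def by blast
      qed
    qed
    have wi: "w \<noteq> root i" using ri w by auto
    have ne: "1/(w - root i) \<noteq> 0" using wi by simp
    have "r \<le> cmod (w - 1/(1/(w - root i)))" using ri by simp
    with disk_iff[OF w ne] show ?thesis unfolding A_def by blast
  qed
  have eq: "of_nat M * (of_real A * v + cnj w) =
      (\<Sum>i<d. of_real A * (1/(w - root i)) + cnj w) + of_nat (M - d) * cnj w"
  proof -
    have h: "(of_nat M :: complex) = of_nat d + of_nat (M - d)"
      using dM by (metis le_add_diff_inverse of_nat_add)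
    have s1: "(\<Sum>i<d. of_real A * (1/(w - root i)) + cnj w) = of_real A * S + of_nat d * cnj w"
      by (simp add: S_def sum.distrib sum_distrib_left)
    have "of_nat M * (of_real A * v + cnj w) = of_real A * S + of_nat M * cnj w"
      by (simp add: Sv algebra_simps)
    also have "\<dots> = of_real A * S + (of_nat d + of_nat (M - d)) * cnj w" by (subst h) simp
    also have "\<dots> = (of_real A * S + of_nat d * cnj w) + of_nat (M - d) * cnj w" by (simp add: algebra_simps)
    finally show ?thesis by (simp only: s1)
  qed
  have "cmod (of_nat M * (of_real A * v + cnj w)) \<le>
      (\<Sum>i<d. cmod (of_real A * (1/(w - root i)) + cnj w)) + cmod (of_nat (M - d) * cnj w)"
    unfolding eq by (rule order_trans[OF norm_triangle_ineq add_right_mono[OF norm_sum]])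
  also have "\<dots> \<le> (\<Sum>i<d. r) + of_nat (M - d) * r"
  proof (rule add_mono)
    show "(\<Sum>i<d. cmod (of_real A * (1/(w - root i)) + cnj w)) \<le> (\<Sum>i<d. r)"
      by (rule sum_mono) (rule roots, simp)
    show "cmod (of_nat (M - d) * cnj w) \<le> of_nat (M - d) * r"
      using w by (simp add: norm_mult mult_left_mono)
  qed
  also have "\<dots> = of_nat M * r" using dM by (simp add: of_nat_diff algebra_simps)
  finally have "of_nat M * cmod (of_real A * v + cnj w) \<le> of_nat M * r" by (simp add: norm_mult)
  hence "cmod (of_real A * v + cnj w) \<le> r" by (simp add: M_def)
  hence "r \<le> cmod (w - 1/v)" using disk_iff[OF w v0] unfolding A_def by simp
  also have "w - 1/v = z" by (simp add: v_def)
  finally show False using z by simp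
qed

lemma Lc_one: "Lc c 1 = c 0"
  by (simp add: Lc_def)

lemma gws:
  fixes r :: real and y :: "nat \<Rightarrow> complex"
  assumes r: "r > 0"
  shows "(\<forall>t. cmod t < r \<longrightarrow> poly (gp m c) t \<noteq> 0) \<Longrightarrow> (\<forall>i<m. cmod (y i) < r)
         \<Longrightarrow> Lc c (\<Prod>i<m. [:1, y i:]) \<noteq> 0"
proof (induction m arbitrary: c)
  case 0
  have "poly (gp 0 c) 0 \<noteq> 0" using 0 r by simp
  thus ?case by (simp add: Lc_one gp_def poly_monom)
next
  case (Suc m)
  have "Lc c (\<Prod>i<Suc m. [:1, y i:]) = Lc c ([:1, y m:] * (\<Prod>i<m. [:1, y i:]))"
    by (simp add: mult.commute)
  also have "\<dots> = Lc (\<lambda>k. c k + y m * c (Suc k)) (\<Prod>i<m. [:1, y i:])" by (rule Lc_mult)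
  also have "\<dots> \<noteq> 0"
  proof (rule Suc.IH)
    show "\<forall>t. cmod t < r \<longrightarrow> poly (gp m (\<lambda>k. c k + y m * c (Suc k))) t \<noteq> 0"
      by (rule laguerre_step) (use Suc.prems in auto)
    show "\<forall>i<m. cmod (y i) < r" using Suc.prems by auto
  qed
  finally show ?case .
qed

lemma ek_ident:
  fixes b :: "nat \<Rightarrow> real" and s :: complex
  shows "(1 - s) * (\<Sum>k\<le>n. of_real (b k) * s^k) =
    of_real (b 0) - ((\<Sum>k<n. of_real (b k - b (Suc k)) * s^(Suc k)) + of_real (b n) * s^(Suc n))"
  by (induction n) (simp_all add: algebra_simps)

lemma EK:
  fixes b :: "nat \<Rightarrow> real" and s :: complex
  assumes mono: "\<forall>k<n. b (Suc k) \<le> b k" and pos: "b n > 0" and s: "cmod s < 1"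
  shows "(\<Sum>k\<le>n. of_real (b k) * s^k) \<noteq> 0"
proof
  assume h: "(\<Sum>k\<le>n. of_real (b k) * s^k) = 0"
  define T where "T = (\<Sum>k<n. of_real (b k - b (Suc k)) * s^(Suc k)) + of_real (b n) * s^(Suc n)"
  have "of_real (b 0) - T = 0" using ek_ident[of s b n] h unfolding T_def by simp
  hence T0: "T = of_real (b 0)" by simp
  have sp: "cmod s ^ Suc k \<le> 1" for k using s by (intro power_le_one) auto
  have sl: "cmod s ^ Suc n < 1"
  proof -
    have "cmod s ^ Suc n = cmod s * cmod s ^ n" by simp
    also have "\<dots> \<le> cmod s" using s by (intro mult_left_le power_le_one) auto
    finally show ?thesis using s by simp
  qed
  have "cmod T \<le> (\<Sum>k<n. cmod (of_real (b k - b (Suc k)) * s^(Suc k))) + cmod (of_real (b n) * s^(Suc n))"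
    unfolding T_def by (rule order_trans[OF norm_triangle_ineq add_right_mono[OF norm_sum]])
  also have "\<dots> < (\<Sum>k<n. (b k - b (Suc k))) + b n"
  proof (rule add_le_less_mono)
    show "(\<Sum>k<n. cmod (of_real (b k - b (Suc k)) * s^(Suc k))) \<le> (\<Sum>k<n. (b k - b (Suc k)))"
    proof (rule sum_mono)
      fix k assume "k \<in> {..<n}"
      hence nn: "b k - b (Suc k) \<ge> 0" using mono by auto
      have "cmod (of_real (b k - b (Suc k)) * s^(Suc k)) = (b k - b (Suc k)) * cmod s ^ Suc k"
        by (simp only: norm_mult norm_of_real norm_power abs_of_nonneg[OF nn])
      also have "\<dots> \<le> b k - b (Suc k)" using sp[of k] nn by (rule mult_left_le)
      finally show "cmod (of_real (b k - b (Suc k)) * s^(Suc k)) \<le> b k - b (Suc k)" .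
    qed
    show "cmod (of_real (b n) * s^(Suc n)) < b n"
      using sl pos by (simp add: norm_mult norm_power del: power_Suc)
  qed
  also have "\<dots> = b 0" by (simp add: sum_lessThan_telescope')
  finally show False using T0 by simp
qed


lemma base_nz:
  fixes d :: nat and \<gamma> t :: complex
  assumes d: "d \<ge> 1" and st: "of_nat d * cmod (\<gamma> * t) < 1"
  shows "poly (gp d (\<lambda>k. fact k * \<gamma>^k)) t \<noteq> 0"
proof -
  define b :: "nat \<Rightarrow> real" where "b k = fact k * real (d choose k) / real d ^ k" for k
  define s where "s = of_nat d * (\<gamma> * t)"
  have dpos: "real d > 0" using d by simp
  have eqs: "poly (gp d (\<lambda>k. fact k * \<gamma>^k)) t = (\<Sum>k\<le>d. of_real (b k) * s^k)"
    unfolding poly_gp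
  proof (rule sum.cong[OF refl])
    fix k
    have "of_real (b k) * s^k = (fact k * of_nat (d choose k) / of_nat d ^ k) * (of_nat d ^ k * (\<gamma> * t)^k)"
      by (simp add: b_def s_def power_mult_distrib)
    also have "\<dots> = fact k * of_nat (d choose k) * (\<gamma> * t)^k" using dpos by (simp add: field_simps)
    finally show "fact k * \<gamma> ^ k * of_nat (d choose k) * t ^ k = of_real (b k) * s^k"
      by (simp add: power_mult_distrib algebra_simps)
  qed
  have mono: "\<forall>k<d. b (Suc k) \<le> b k"
  proof (intro allI impI)
    fix k assume k: "k < d"
    have nat_id: "Suc k * (d choose Suc k) = (d - k) * (d choose k)"
      using binomial_absorption[of k d] binomial_absorb_comp[of d k] by simp
    hence rid: "real (Suc k) * real (d choose Suc k) = real (d - k) * real (d choose k)"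
      by (metis of_nat_mult)
    have "b (Suc k) = fact k * (real (Suc k) * real (d choose Suc k)) / real d ^ Suc k"
      by (simp add: b_def algebra_simps)
    also have "\<dots> = fact k * (real (d - k) * real (d choose k)) / real d ^ Suc k" by (simp only: rid)
    also have "\<dots> \<le> fact k * (real d * real (d choose k)) / real d ^ Suc k"
      by (intro divide_right_mono mult_left_mono mult_right_mono) auto
    also have "\<dots> = b k" using dpos by (simp add: b_def field_simps)
    finally show "b (Suc k) \<le> b k" .
  qed
  have pos: "b d > 0" using dpos by (simp add: b_def)
  have sn: "cmod s < 1" using st by (simp add: s_def norm_mult)
  show ?thesis unfolding eqs by (rule EK[OF mono pos sn])
qed

lemma Lc_telescope:
  "Lc (\<lambda>k. fact k * \<gamma>^k) (F - smult \<gamma> (pderiv F)) = coeff F 0"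
proof -
  define N where "N = degree F"
  define h where "h k = fact k * \<gamma>^k * coeff F k" for k
  have dg: "degree (F - smult \<gamma> (pderiv F)) \<le> N"
  proof (rule degree_diff_le)
    show "degree F \<le> N" by (simp add: N_def)
    show "degree (smult \<gamma> (pderiv F)) \<le> N"
      using degree_smult_le[of \<gamma> "pderiv F"] by (simp add: degree_pderiv N_def)
  qed
  have "Lc (\<lambda>k. fact k * \<gamma>^k) (F - smult \<gamma> (pderiv F)) =
        (\<Sum>k\<le>N. fact k * \<gamma>^k * coeff (F - smult \<gamma> (pderiv F)) k)"
    by (rule Lc_bound[OF dg])
  also have "\<dots> = (\<Sum>k\<le>N. h k - h (Suc k))"
  proof (rule sum.cong[OF refl])
    fix k
    show "fact k * \<gamma>^k * coeff (F - smult \<gamma> (pderiv F)) k = h k - h (Suc k)"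
      by (simp add: h_def coeff_pderiv algebra_simps)
  qed
  also have "\<dots> = h 0 - h (Suc N)" by (rule sum_telescope)
  also have "h (Suc N) = 0" by (simp add: h_def N_def coeff_eq_0)
  finally show ?thesis by (simp add: h_def)
qed

lemma H1_degree: "degree (f - smult \<gamma> (pderiv f)) = degree (f :: complex poly)"
proof (cases "degree f = 0")
  case True
  hence "pderiv f = 0" by (simp add: pderiv_eq_0_iff)
  thus ?thesis by simp
next
  case False
  have "degree (- smult \<gamma> (pderiv f)) < degree f"
    using False by (simp add: degree_pderiv)
  thus ?thesis using degree_add_eq_left by (metis diff_conv_add_uminus)
qed

lemma H1_zero: "f - smult \<gamma> (pderiv f) = 0 \<Longrightarrow> (f :: complex poly) = 0"
proof -
  assume h: "f - smult \<gamma> (pderiv f) = 0"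
  hence "degree f = 0" using H1_degree[of f \<gamma>] by simp
  hence "pderiv f = 0" by (simp add: pderiv_eq_0_iff)
  thus "f = 0" using h by simp
qed


lemma prod_smult_lessThan:
  fixes m :: nat and h :: "nat \<Rightarrow> complex"
  shows "(\<Prod>i<m. smult (h i) (q i)) = smult (\<Prod>i<m. h i) (\<Prod>i<m. (q i :: complex poly))"
  by (induction m) (simp_all add: mult_ac)

lemma dir2:
  fixes f :: "complex poly" and \<gamma> z :: complex
  assumes f0: "f \<noteq> 0" and fz: "poly f z = 0"
  shows "\<exists>w. poly (f - smult \<gamma> (pderiv f)) w = 0 \<and> cmod (z - w) \<le> of_nat (degree f) * cmod \<gamma>"
proof (rule ccontr)
  define g where "g = f - smult \<gamma> (pderiv f)"
  define d where "d = degree f"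
  assume "\<not> ?thesis"
  hence H: "\<And>w. poly g w = 0 \<Longrightarrow> of_nat d * cmod \<gamma> < cmod (z - w)"
    unfolding g_def d_def by (meson not_le)
  have \<gamma>0: "\<gamma> \<noteq> 0"
  proof
    assume g0: "\<gamma> = 0"
    hence "poly g z = 0" using fz by (simp add: g_def)
    from H[OF this] g0 show False by simp
  qed
  have d1: "d \<ge> 1"
  proof (rule ccontr)
    assume "\<not> d \<ge> 1"
    hence "d = 0" by simp
    then obtain a where "f = [:a:]" unfolding d_def by (metis degree_eq_zeroE)
    thus False using f0 fz by simp
  qed
  have g0: "g \<noteq> 0" using H1_zero f0 unfolding g_def by blast
  have dg: "degree g = d" unfolding g_def d_def by (rule H1_degree)
  define F where "F = pcompose f [:z, 1:]"
  define G where "G = pcompose g [:z, 1:]"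
  have GF: "G = F - smult \<gamma> (pderiv F)"
    by (simp add: G_def F_def g_def pcompose_diff pcompose_smult pderiv_pcompose pderiv_pCons)
  define c where "c k = fact k * \<gamma>^k" for k
  have LG: "Lc c G = 0"
  proof -
    have "Lc c G = coeff F 0" unfolding GF c_def by (rule Lc_telescope)
    also have "\<dots> = poly F 0" by (simp add: poly_0_coeff_0)
    also have "\<dots> = 0" using fz by (simp add: F_def poly_pcompose)
    finally show ?thesis .
  qed
  have G0: "G \<noteq> 0" using g0 pcompose_eq_0[of g "[:z,1:]"] by (auto simp: G_def)
  have dG: "degree G = d" using dg by (simp add: G_def degree_pcompose)
  obtain root where dec: "smult (lead_coeff G) (\<Prod>i<degree G. [:-root i,1:]) = G"
    by (rule complex_poly_decompose')
  have rbig: "of_nat d * cmod \<gamma> < cmod (root i)" if "i < d" for i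
  proof -
    have "poly (\<Prod>i<d. [:-root i,1:]) (root i) = 0" by (rule prod_root_zero[OF that])
    hence "poly G (root i) = 0" using dec dG by (metis poly_smult mult_zero_right)
    hence "poly g (z + root i) = 0" by (simp add: G_def poly_pcompose)
    from H[OF this] show ?thesis by simp
  qed
  have dgpos: "of_nat d * cmod \<gamma> > 0" using d1 \<gamma>0 by simp
  have rnz: "root i \<noteq> 0" if "i < d" for i using rbig[OF that] dgpos by auto
  define y where "y i = - 1 / root i" for i
  have prodeq: "(\<Prod>i<d. [:-root i,1:]) = smult (\<Prod>i<d. - root i) (\<Prod>i<d. [:1, y i:])"
  proof -
    have "(\<Prod>i<d. [:-root i,1:]) = (\<Prod>i<d. smult (- root i) [:1, y i:])"
      by (rule prod.cong[OF refl]) (simp add: y_def rnz)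
    also have "\<dots> = smult (\<Prod>i<d. - root i) (\<Prod>i<d. [:1, y i:])" by (rule prod_smult_lessThan)
    finally show ?thesis .
  qed
  have "0 = Lc c G" using LG by simp
  also have "\<dots> = lead_coeff G * (\<Prod>i<d. - root i) * Lc c (\<Prod>i<d. [:1, y i:])"
    by (subst dec[symmetric]) (simp add: dG prodeq Lc_smult)
  finally have "lead_coeff G * (\<Prod>i<d. - root i) * Lc c (\<Prod>i<d. [:1, y i:]) = 0" by simp
  moreover have "lead_coeff G \<noteq> 0" using G0 by simp
  moreover have "(\<Prod>i<d. - root i) \<noteq> 0" using rnz by simp
  ultimately have L0: "Lc c (\<Prod>i<d. [:1, y i:]) = 0" by simp
  define r where "r = 1 / (of_nat d * cmod \<gamma>)"
  have r0: "r > 0" using dgpos by (simp add: r_def)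
  have "Lc c (\<Prod>i<d. [:1, y i:]) \<noteq> 0"
  proof (rule gws[OF r0])
    show "\<forall>t. cmod t < r \<longrightarrow> poly (gp d c) t \<noteq> 0"
    proof (intro allI impI)
      fix t assume t: "cmod t < r"
      have "of_nat d * cmod (\<gamma> * t) < 1"
        using t dgpos by (simp add: r_def norm_mult field_simps)
      thus "poly (gp d c) t \<noteq> 0" unfolding c_def by (rule base_nz[OF d1])
    qed
    show "\<forall>i<d. cmod (y i) < r"
    proof (intro allI impI)
      fix i assume i: "i < d"
      have "cmod (y i) = 1 / cmod (root i)" by (simp add: y_def norm_divide)
      also have "\<dots> < r" unfolding r_def using rbig[OF i] dgpos by (simp add: frac_less2)
      finally show "cmod (y i) < r" .
    qed
  qed
  thus False using L0 by simp
qed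


lemma dir1:
  fixes f :: "complex poly" and \<gamma> w :: complex
  assumes f0: "f \<noteq> 0" and gw: "poly (f - smult \<gamma> (pderiv f)) w = 0"
  shows "\<exists>a. poly f a = 0 \<and> cmod (w - a) \<le> of_nat (degree f) * cmod \<gamma>"
proof (cases "poly f w = 0")
  case True
  thus ?thesis by (intro exI[of _ w]) simp
next
  case False
  define d where "d = degree f"
  obtain root where dec: "smult (lead_coeff f) (\<Prod>i<degree f. [:-root i,1:]) = f"
    by (rule complex_poly_decompose')
  define P where "P = (\<Prod>i<d. [:-root i,1:])"
  have fP: "f = smult (lead_coeff f) P" using dec P_def d_def by simp
  have lc: "lead_coeff f \<noteq> 0" using f0 by simp
  have Pw: "poly P w \<noteq> 0" using False fP by (metis poly_smult mult_zero_right)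
  define S where "S = (\<Sum>i<d. 1/(w - root i))"
  have dP: "poly (pderiv P) w = poly P w * S"
    unfolding P_def S_def by (rule logderiv) (use Pw P_def in simp)
  have "poly (f - smult \<gamma> (pderiv f)) w = lead_coeff f * poly P w * (1 - \<gamma> * S)"
  proof -
    have "poly f w = lead_coeff f * poly P w" by (subst fP) simp
    moreover have "poly (pderiv f) w = lead_coeff f * poly P w * S"
      by (subst fP) (simp add: pderiv_smult dP)
    ultimately show ?thesis by (simp add: algebra_simps)
  qed
  hence gS: "\<gamma> * S = 1" using gw lc Pw by simp
  have rootf: "poly f (root i) = 0" if "i < d" for i
  proof -
    have "poly P (root i) = 0" unfolding P_def by (rule prod_root_zero[OF that])
    thus ?thesis by (subst fP) simp
  qed
  have dne: "d \<noteq> 0"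
  proof
    assume "d = 0" hence "S = 0" by (simp add: S_def)
    thus False using gS by simp
  qed
  define D where "D = (\<lambda>i. cmod (w - root i)) ` {..<d}"
  have Dfin: "finite D" "D \<noteq> {}" using dne by (auto simp: D_def)
  define \<delta> where "\<delta> = Min D"
  obtain i0 where i0: "i0 < d" "cmod (w - root i0) = \<delta>"
    using Min_in[OF Dfin] unfolding \<delta>_def D_def by auto
  have \<delta>le: "\<delta> \<le> cmod (w - root i)" if "i < d" for i
    unfolding \<delta>_def D_def using that by (intro Min_le) auto
  have \<delta>pos: "\<delta> > 0"
  proof -
    have "w \<noteq> root i0" using rootf[OF i0(1)] False by auto
    thus ?thesis using i0(2) by auto
  qed
  have "1 = cmod (\<gamma> * S)" using gS by simp
  also have "\<dots> = cmod \<gamma> * cmod S" by (simp add: norm_mult)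
  also have "cmod S \<le> (\<Sum>i<d. 1 / \<delta>)"
    unfolding S_def
  proof (rule order_trans[OF norm_sum sum_mono])
    fix i assume "i \<in> {..<d}"
    hence "\<delta> \<le> cmod (w - root i)" using \<delta>le by simp
    thus "cmod (1 / (w - root i)) \<le> 1 / \<delta>" using \<delta>pos by (simp add: norm_divide frac_le)
  qed
  hence "cmod S \<le> of_nat d / \<delta>" by simp
  hence "cmod \<gamma> * cmod S \<le> cmod \<gamma> * (of_nat d / \<delta>)" by (rule mult_left_mono) simp
  finally have "1 \<le> cmod \<gamma> * of_nat d / \<delta>" by simp
  hence "\<delta> \<le> of_nat d * cmod \<gamma>" using \<delta>pos by (simp add: field_simps)
  thus ?thesis using rootf[OF i0(1)] i0(2) unfolding d_def by blast
qed


lemma dh_le: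
  assumes "finite A" "A \<noteq> {}" "finite B" "B \<noteq> {}" "\<forall>y\<in>B. \<exists>x\<in>A. cmod (x - y) \<le> \<delta>"
  shows "dh A B \<le> \<delta>"
  unfolding dh_def using assms by (auto simp: Max_le_iff Min_le_iff)

lemma dH_sym: "dH A B = dH B A"
  unfolding dH_def by (auto simp: max.commute)

lemma Zset_nz: "f \<noteq> 0 \<Longrightarrow> Zset f = {z. poly f z = 0}"
  by (simp add: Zset_def)

lemma Zset_props:
  fixes f :: "complex poly"
  assumes "f \<noteq> 0" "degree f \<ge> 1"
  shows "finite (Zset f)" "Zset f \<noteq> {}" "Zset f \<noteq> UNIV"
proof -
  show fin: "finite (Zset f)" using assms by (simp add: Zset_nz poly_roots_finite)
  have "\<not> constant (poly f)" using assms by (simp add: constant_degree)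
  then obtain z where "poly f z = 0" using fundamental_theorem_of_algebra by blast
  thus "Zset f \<noteq> {}" using assms by (auto simp: Zset_nz)
  show "Zset f \<noteq> UNIV" using fin infinite_UNIV_char_0 by auto
qed

lemma bound:
  fixes f :: "complex poly"
  assumes "f \<in> Pn n"
  shows "dH (Zset f) (Zset (H1 \<gamma> f)) \<le> ereal (real n * cmod \<gamma>)"
proof -
  have dn: "degree f \<le> n" using assms by (simp add: Pn_def)
  show ?thesis
  proof (cases "f = 0")
    case True
    thus ?thesis by (simp add: H1_def Zset_def dH_def)
  next
    case f0: False
    show ?thesis
    proof (cases "degree f = 0")
      case True
      hence "pderiv f = 0" by (simp add: pderiv_eq_0_iff)
      hence e: "H1 \<gamma> f = f" by (simp add: H1_def)
      obtain a where "f = [:a:]" using True by (metis degree_eq_zeroE)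
      hence "Zset f = {}" using f0 by (simp add: Zset_def)
      thus ?thesis using e by (simp add: dH_def)
    next
      case False
      define g where "g = H1 \<gamma> f"
      have g0: "g \<noteq> 0" using H1_zero f0 unfolding g_def H1_def by blast
      have dg: "degree g = degree f" unfolding g_def H1_def by (rule H1_degree)
      have d1: "degree f \<ge> 1" using False by simp
      note A = Zset_props[OF f0 d1]
      note B = Zset_props[OF g0 d1[folded dg]]
      have "dh (Zset f) (Zset g) \<le> real (degree f) * cmod \<gamma>"
      proof (rule dh_le[OF A(1,2) B(1,2)], intro ballI)
        fix y assume "y \<in> Zset g"
        hence "poly (f - smult \<gamma> (pderiv f)) y = 0" using g0 by (simp add: Zset_nz g_def H1_def)
        from dir1[OF f0 this] obtain a where "poly f a = 0" "cmod (y - a) \<le> real (degree f) * cmod \<gamma>" by auto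
        thus "\<exists>x\<in>Zset f. cmod (x - y) \<le> real (degree f) * cmod \<gamma>"
          using f0 by (auto simp: Zset_nz norm_minus_commute)
      qed
      moreover have "dh (Zset g) (Zset f) \<le> real (degree f) * cmod \<gamma>"
      proof (rule dh_le[OF B(1,2) A(1,2)], intro ballI)
        fix y assume "y \<in> Zset f"
        hence "poly f y = 0" using f0 by (simp add: Zset_nz)
        from dir2[OF f0 this] obtain w where "poly (f - smult \<gamma> (pderiv f)) w = 0" "cmod (y - w) \<le> real (degree f) * cmod \<gamma>" by auto
        thus "\<exists>x\<in>Zset g. cmod (x - y) \<le> real (degree f) * cmod \<gamma>"
          using g0 by (auto simp: Zset_nz g_def H1_def norm_minus_commute)
      qed
      moreover have "real (degree f) * cmod \<gamma> \<le> real n * cmod \<gamma>"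
        using dn by (intro mult_right_mono) auto
      ultimately have "max (dh (Zset f) (Zset g)) (dh (Zset g) (Zset f)) \<le> real n * cmod \<gamma>" by simp
      thus ?thesis using A B by (simp add: dH_def g_def)
    qed
  qed
qed


lemma exact:
  fixes n :: nat and \<gamma> :: complex
  assumes n: "n \<ge> 1"
  shows "dH (Zset (monom 1 n)) (Zset (H1 \<gamma> (monom 1 n))) = ereal (real n * cmod \<gamma>)"
proof -
  define f :: "complex poly" where "f = monom 1 n"
  define g where "g = H1 \<gamma> f"
  have f0: "f \<noteq> 0" by (simp add: f_def)
  have df: "degree f = n" by (simp add: f_def degree_monom_eq)
  have g0: "g \<noteq> 0" using H1_zero f0 unfolding g_def H1_def by blast
  have dg: "degree g = n" unfolding g_def H1_def using H1_degree df by simp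
  have d1: "degree f \<ge> 1" "degree g \<ge> 1" using df dg n by auto
  note A = Zset_props[OF f0 d1(1)]
  note B = Zset_props[OF g0 d1(2)]
  have pf: "poly f z = z ^ n" for z by (simp add: f_def poly_monom)
  have Zf: "Zset f = {0}" using f0 n by (auto simp: Zset_nz pf)
  have pg: "poly g z = z ^ (n - 1) * (z - of_nat n * \<gamma>)" for z
  proof -
    have "poly g z = z ^ n - \<gamma> * (of_nat n * z ^ (n - 1))"
      by (simp add: g_def H1_def f_def pderiv_monom poly_monom)
    moreover obtain k where nk: "n = Suc k" using n by (cases n) auto
    ultimately show ?thesis by (simp add: algebra_simps)
  qed
  define u where "u = of_nat n * \<gamma>"
  have cu: "cmod u = real n * cmod \<gamma>" by (simp add: u_def norm_mult)
  have uZ: "u \<in> Zset g" using g0 by (simp add: Zset_nz pg u_def)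
  have Zsub: "y = 0 \<or> y = u" if "y \<in> Zset g" for y
    using that g0 by (auto simp: Zset_nz pg u_def)
  have h1: "dh (Zset f) (Zset g) = real n * cmod \<gamma>"
  proof -
    have "dh (Zset f) (Zset g) = Max ((\<lambda>y. cmod y) ` Zset g)"
      unfolding dh_def Zf by simp
    also have "\<dots> = cmod u"
    proof (rule Max_eqI)
      show "finite ((\<lambda>y. cmod y) ` Zset g)" using B by simp
      show "cmod u \<in> (\<lambda>y. cmod y) ` Zset g" using uZ by simp
      fix x assume "x \<in> (\<lambda>y. cmod y) ` Zset g"
      then obtain y where y: "y \<in> Zset g" "x = cmod y" by auto
      from Zsub[OF y(1)] show "x \<le> cmod u" using y(2) by auto
    qed
    finally show ?thesis using cu by simp
  qed
  have h2: "dh (Zset g) (Zset f) \<le> real n * cmod \<gamma>"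
  proof (rule dh_le[OF B(1,2) A(1,2)], intro ballI)
    fix y assume "y \<in> Zset f"
    hence "y = 0" using Zf by simp
    thus "\<exists>x\<in>Zset g. cmod (x - y) \<le> real n * cmod \<gamma>" using uZ cu by (intro bexI[of _ u]) auto
  qed
  have "dH (Zset f) (Zset g) = ereal (max (dh (Zset f) (Zset g)) (dh (Zset g) (Zset f)))"
    using A B by (simp add: dH_def)
  also have "\<dots> = ereal (real n * cmod \<gamma>)" using h1 h2 by simp
  finally show ?thesis by (simp add: f_def g_def)
qed

lemma H1_diff: "H1 \<gamma> (a - b) = H1 \<gamma> a - H1 \<gamma> b"
  by (simp add: H1_def pderiv_diff smult_diff_right algebra_simps)

lemma H1_add: "H1 \<gamma> (a + b) = H1 \<gamma> a + H1 \<gamma> b"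
  by (simp add: H1_def pderiv_add smult_add_right algebra_simps)

lemma H1_inj: "H1 \<gamma> a = H1 \<gamma> b \<Longrightarrow> a = (b :: complex poly)"
proof -
  assume "H1 \<gamma> a = H1 \<gamma> b"
  hence "H1 \<gamma> (a - b) = 0" by (simp add: H1_diff)
  hence "a - b = 0" unfolding H1_def by (rule H1_zero)
  thus "a = b" by simp
qed

lemma degree_pderiv_iter: "degree ((pderiv ^^ k) f) = degree (f :: complex poly) - k"
  by (induction k) (simp_all add: degree_pderiv)

lemma pderiv_iter_zero:
  assumes "degree (f :: complex poly) < Suc k" shows "(pderiv ^^ Suc k) f = 0"
proof -
  have "degree ((pderiv ^^ k) f) = 0" using assms by (simp add: degree_pderiv_iter)
  thus ?thesis by (simp add: pderiv_eq_0_iff)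
qed

lemma H1_sum:
  "H1 \<gamma> (\<Sum>k\<le>N. smult (\<gamma>^k) ((pderiv ^^ k) f)) = f - smult (\<gamma>^(Suc N)) ((pderiv ^^ (Suc N)) f)"
proof (induction N)
  case 0
  show ?case by (simp add: H1_def)
next
  case (Suc N)
  have "H1 \<gamma> (\<Sum>k\<le>Suc N. smult (\<gamma>^k) ((pderiv ^^ k) f)) =
        H1 \<gamma> (\<Sum>k\<le>N. smult (\<gamma>^k) ((pderiv ^^ k) f)) + H1 \<gamma> (smult (\<gamma>^Suc N) ((pderiv ^^ Suc N) f))"
    by (simp add: H1_add)
  also have "\<dots> = f - smult (\<gamma>^(Suc (Suc N))) ((pderiv ^^ (Suc (Suc N))) f)"
    unfolding Suc.IH by (simp add: H1_def pderiv_smult algebra_simps)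
  finally show ?case .
qed

lemma H1inv_spec:
  assumes f: "f \<in> Pn n"
  shows "H1inv n \<gamma> f \<in> Pn n \<and> H1 \<gamma> (H1inv n \<gamma> f) = f"
proof -
  define g0 where "g0 = (\<Sum>k\<le>n. smult (\<gamma>^k) ((pderiv ^^ k) f))"
  have dn: "degree f < Suc n" using f by (simp add: Pn_def)
  have Hg: "H1 \<gamma> g0 = f" unfolding g0_def H1_sum using pderiv_iter_zero[OF dn] by simp
  have "degree g0 = degree f" using H1_degree[of g0 \<gamma>] Hg by (simp add: H1_def)
  hence g0P: "g0 \<in> Pn n" using f by (simp add: Pn_def)
  have "H1inv n \<gamma> f = g0"
    unfolding H1inv_def
  proof (rule the_equality)
    show "g0 \<in> Pn n \<and> H1 \<gamma> g0 = f" using g0P Hg by simp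
    fix g assume "g \<in> Pn n \<and> H1 \<gamma> g = f"
    thus "g = g0" using Hg H1_inj by metis
  qed
  thus ?thesis using g0P Hg by simp
qed

lemma H1inv_H1:
  assumes g: "g \<in> Pn n"
  shows "H1inv n \<gamma> (H1 \<gamma> g) = g"
proof -
  have "H1 \<gamma> g \<in> Pn n" using g H1_degree[of g \<gamma>] by (simp add: Pn_def H1_def)
  from H1inv_spec[OF this] have "H1 \<gamma> (H1inv n \<gamma> (H1 \<gamma> g)) = H1 \<gamma> g" by simp
  thus ?thesis by (rule H1_inj)
qed

theorem mainTheorem18:
  fixes n :: nat and \<gamma> :: complex
  assumes "n \<ge> 1"
  shows "KH n (H1 \<gamma>) = ereal (real n * cmod \<gamma>) \<and>
         KH n (H1inv n \<gamma>) = ereal (real n * cmod \<gamma>)"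
proof
  define m :: "complex poly" where "m = monom 1 n"
  have mP: "m \<in> Pn n" by (simp add: m_def Pn_def degree_monom_le)
  have ex: "dH (Zset m) (Zset (H1 \<gamma> m)) = ereal (real n * cmod \<gamma>)"
    unfolding m_def by (rule exact[OF assms])
  show "KH n (H1 \<gamma>) = ereal (real n * cmod \<gamma>)"
    unfolding KH_def
  proof (rule antisym)
    show "(SUP f\<in>Pn n. dH (Zset f) (Zset (H1 \<gamma> f))) \<le> ereal (real n * cmod \<gamma>)"
      by (rule SUP_least) (rule bound)
    show "ereal (real n * cmod \<gamma>) \<le> (SUP f\<in>Pn n. dH (Zset f) (Zset (H1 \<gamma> f)))"
      unfolding ex[symmetric] by (rule SUP_upper[OF mP])
  qed
  show "KH n (H1inv n \<gamma>) = ereal (real n * cmod \<gamma>)"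
    unfolding KH_def
  proof (rule antisym)
    show "(SUP f\<in>Pn n. dH (Zset f) (Zset (H1inv n \<gamma> f))) \<le> ereal (real n * cmod \<gamma>)"
    proof (rule SUP_least)
      fix f assume f: "f \<in> Pn n"
      define g where "g = H1inv n \<gamma> f"
      have gP: "g \<in> Pn n" and Hg: "H1 \<gamma> g = f" using H1inv_spec[OF f] by (simp_all add: g_def)
      have "dH (Zset f) (Zset g) = dH (Zset (H1 \<gamma> g)) (Zset g)" by (simp only: Hg)
      also have "\<dots> = dH (Zset g) (Zset (H1 \<gamma> g))" by (rule dH_sym)
      also have "\<dots> \<le> ereal (real n * cmod \<gamma>)" by (rule bound[OF gP])
      finally show "dH (Zset f) (Zset (H1inv n \<gamma> f)) \<le> ereal (real n * cmod \<gamma>)" by (simp only: g_def)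
    qed
    have f0P: "H1 \<gamma> m \<in> Pn n" using mP H1_degree[of m \<gamma>] by (simp add: Pn_def H1_def)
    have "ereal (real n * cmod \<gamma>) = dH (Zset m) (Zset (H1 \<gamma> m))" by (simp only: ex)
    also have "\<dots> = dH (Zset (H1 \<gamma> m)) (Zset m)" by (rule dH_sym)
    also have "\<dots> = dH (Zset (H1 \<gamma> m)) (Zset (H1inv n \<gamma> (H1 \<gamma> m)))" by (simp only: H1inv_H1[OF mP])
    also have "\<dots> \<le> (SUP f\<in>Pn n. dH (Zset f) (Zset (H1inv n \<gamma> f)))" by (rule SUP_upper[OF f0P])
    finally show "ereal (real n * cmod \<gamma>) \<le> (SUP f\<in>Pn n. dH (Zset f) (Zset (H1inv n \<gamma> f)))" .
  qed
qed

end
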